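(* In Ruleset B, for any superposition of single Nim heaps with $k=\max_{1\le j\le\ell} i_j\ge1$, \[\langle \mathrm{Nim}(i_1),\ldots,\mathrm{Nim}(i_\ell)\rangle_B\equiv\begin{cases}0 & \text{if } k=2,\\ * & \text{if } k=1,\\ *(k-1) & \text{otherwise.}\end{cases}\]
   Context: Single-heap Nim: $\mathrm{Nim}(x)$ is a heap of $x$ tokens; classical move $(1,-j)$, $j\ge1$, removes $j$ tokens and is illegal if fewer than $j$ tokens remain. Quantum variation: a position is a nonempty finite set $\langle G_1,\ldots,G_n\rangle$ of classical positions; a classical move is legal if legal in some $G_i$; a Q-move is a nonempty set of legal classical moves, leading to the superposition of all legal results of applying one of its moves to one of the $G_i$. Ruleset B (subscript $B$): only Q-moves consisting of at least two distinct classical moves are allowed, except that when the player has exactly one legal classical move overall, he may play it as an unsuperposed move. The player with no allowed Q-move loses. $\equiv$ is game equivalence, $*k$ the value of a classical Nim heap of $k$ tokens, $*=*1$, $*0=0$. *)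

theory Defs
  imports Main "HOL-Library.FSet"
begin

datatype game = Game (opts: "game fset")

definition summoves :: "game \<times> game \<Rightarrow> (game \<times> game) set" where
  "summoves p = {(g', snd p) | g'. g' |\<in>| opts (fst p)} \<union> {(fst p, x') | x'. x' |\<in>| opts (snd p)}"

text \<open>First player (player to move) wins G + X under normal play.  Least fixed point:
  there is a move after which every reply leads again to a first-player win.\<close>
inductive Nwin :: "game \<Rightarrow> game \<Rightarrow> bool" where
  "p' \<in> summoves (G, X) \<Longrightarrow> (\<forall>(a, b) \<in> summoves p'. Nwin a b) \<Longrightarrow> Nwin G X"

definition game_equiv :: "game \<Rightarrow> game \<Rightarrow> bool" (infix "\<equiv>\<^sub>g" 50) where
  "G \<equiv>\<^sub>g H \<longleftrightarrow> (\<forall>X. Nwin G X \<longleftrightarrow> Nwin H X)"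

text \<open>Nimbers: *k has options *0, ..., *(k-1).\<close>
primrec nims :: "nat \<Rightarrow> game fset" where
  "nims 0 = {||}"
| "nims (Suc n) = finsert (Game (nims n)) (nims n)"

definition nim :: "nat \<Rightarrow> game" where
  "nim k = Game (nims k)"

text \<open>A position is a nonempty finite set of heap sizes.  A classical move is removal of
  j \<ge> 1 tokens; it is legal in the superposition if legal in some component.\<close>
definition legal_moves :: "nat set \<Rightarrow> nat set" where
  "legal_moves S = {j. 1 \<le> j \<and> (\<exists>i\<in>S. j \<le> i)}"

definition qresult :: "nat set \<Rightarrow> nat set \<Rightarrow> nat set" where
  "qresult S M = {i - j | i j. i \<in> S \<and> j \<in> M \<and> j \<le> i}"

definition allowedB :: "nat set \<Rightarrow> nat set \<Rightarrow> bool" where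
  "allowedB S M \<longleftrightarrow> M \<noteq> {} \<and> M \<subseteq> legal_moves S \<and>
     (2 \<le> card M \<or> (card (legal_moves S) = 1 \<and> card M = 1))"

lemma legal_moves_sub: "finite S \<Longrightarrow> legal_moves S \<subseteq> {1..Max S}"
  unfolding legal_moves_def by (auto intro: order_trans[OF _ Max_ge])

lemma qresult_less:
  assumes "finite S" "allowedB S M" "x \<in> qresult S M"
  shows "x < Max S"
proof -
  from assms(3) obtain i j where "i \<in> S" "j \<in> M" "j \<le> i" "x = i - j"
    unfolding qresult_def by blast
  moreover have "1 \<le> j" using assms(2) \<open>j \<in> M\<close> unfolding allowedB_def legal_moves_def by auto
  moreover have "i \<le> Max S" using assms(1) \<open>i \<in> S\<close> by simp
  ultimately show ?thesis by linarith
qed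

lemma qresult_fin_ne:
  assumes "finite S" "allowedB S M"
  shows "finite (qresult S M) \<and> qresult S M \<noteq> {}"
proof
  have "finite M" using assms legal_moves_sub[OF assms(1)] unfolding allowedB_def
    by (meson finite_atLeastAtMost finite_subset)
  then have "finite ((\<lambda>(i, j). i - j) ` (S \<times> M))" using assms(1) by simp
  moreover have "qresult S M \<subseteq> (\<lambda>(i, j). i - j) ` (S \<times> M)" unfolding qresult_def by force
  ultimately show "finite (qresult S M)" by (rule finite_subset[rotated])
  from assms(2) obtain j where "j \<in> M" unfolding allowedB_def by blast
  then obtain i where "i \<in> S" "j \<le> i" using assms(2) unfolding allowedB_def legal_moves_def by blast
  then show "qresult S M \<noteq> {}" using \<open>j \<in> M\<close> unfolding qresult_def by blast
qed

function qgame :: "nat set \<Rightarrow> game" where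
  "qgame S = (if finite S \<and> S \<noteq> {}
      then Game (Abs_fset ((\<lambda>M. qgame (qresult S M)) ` {M. allowedB S M}))
      else Game {||})"
  by auto
termination
proof (relation "measure (\<lambda>S. Max S)")
  fix S M
  assume a: "finite S \<and> S \<noteq> {}" "M \<in> {M. allowedB S M}"
  then have fn: "finite (qresult S M)" "qresult S M \<noteq> {}" using qresult_fin_ne by auto
  have "Max (qresult S M) \<in> qresult S M" using fn by simp
  then have "Max (qresult S M) < Max S" using qresult_less a by auto
  then show "(qresult S M, S) \<in> measure Max" by simp
qed auto

end

theory Submission imports Defs begin

definition mex :: "nat set \<Rightarrow> nat" where "mex V = (LEAST n. n \<notin> V)"

lemma mex_notin: "finite V \<Longrightarrow> mex V \<notin> V"
  unfolding mex_def by (rule LeastI_ex) (meson ex_new_if_finite infinite_UNIV_nat)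

lemma mex_less: "m < mex V \<Longrightarrow> m \<in> V"
  unfolding mex_def using not_less_Least by blast

lemma mex_eq: "(\<forall>m<n. m \<in> V) \<Longrightarrow> n \<notin> V \<Longrightarrow> mex V = n"
  unfolding mex_def by (rule Least_equality) (auto simp: not_less[symmetric])

primrec grundy :: "game \<Rightarrow> nat" where
  "grundy (Game A) = mex (fset (fimage grundy A))"

primrec height :: "game \<Rightarrow> nat" where
  "height (Game A) = Suc (Max (insert 0 (fset (fimage height A))))"

lemma height_opt: "c |\<in>| opts a \<Longrightarrow> height c < height a"
  by (cases a) (auto simp: less_Suc_eq_le)

lemma grundy_notin: "grundy c \<noteq> grundy a" if "c |\<in>| opts a"
proof (cases a)
  case (Game A)
  have "mex (grundy ` fset A) \<notin> grundy ` fset A" by (rule mex_notin) simp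
  then show ?thesis using that Game by force
qed

lemma grundy_less: "m < grundy a \<Longrightarrow> \<exists>c. c |\<in>| opts a \<and> grundy c = m"
  by (cases a) (auto dest: mex_less)

lemma summoves_iff: "(c, d) \<in> summoves (a, b) \<longleftrightarrow> (d = b \<and> c |\<in>| opts a) \<or> (c = a \<and> d |\<in>| opts b)"
  unfolding summoves_def by auto

lemma key: "(\<forall>(c, d)\<in>summoves (a, b). grundy c \<noteq> grundy d) \<longleftrightarrow> grundy a = grundy b"
proof
  assume H: "\<forall>(c, d)\<in>summoves (a, b). grundy c \<noteq> grundy d"
  show "grundy a = grundy b"
  proof (rule ccontr)
    assume "grundy a \<noteq> grundy b"
    then consider "grundy a < grundy b" | "grundy b < grundy a" by linarith
    then show False
    proof cases
      case 1 then obtain d where "d |\<in>| opts b" "grundy d = grundy a" using grundy_less by blast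
      then show False using H summoves_iff[of a d a b] by auto
    next
      case 2 then obtain c where "c |\<in>| opts a" "grundy c = grundy b" using grundy_less by blast
      then show False using H summoves_iff[of c b a b] by auto
    qed
  qed
next
  assume "grundy a = grundy b"
  then show "\<forall>(c, d)\<in>summoves (a, b). grundy c \<noteq> grundy d"
    using grundy_notin by (auto simp: summoves_iff) (metis grundy_notin)+
qed

lemma sg_aux: "height G + height X = n \<Longrightarrow> (Nwin G X \<longleftrightarrow> grundy G \<noteq> grundy X)"
proof (induction n arbitrary: G X rule: less_induct)
  case (less n)
  have IH: "Nwin c' d' \<longleftrightarrow> grundy c' \<noteq> grundy d'"
    if "(c, d) \<in> summoves (G, X)" "(c', d') \<in> summoves (c, d)" for c d c' d'
  proof -
    have "height c + height d < n" using that(1) less.prems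
      by (auto simp: summoves_iff dest: height_opt)
    moreover have "height c' + height d' < height c + height d" using that(2)
      by (auto simp: summoves_iff dest: height_opt)
    ultimately show ?thesis using less.IH[of "height c' + height d'" c' d'] by auto
  qed
  have "Nwin G X \<longleftrightarrow> (\<exists>p'\<in>summoves (G, X). \<forall>(a, b)\<in>summoves p'. Nwin a b)"
    by (subst Nwin.simps) auto
  also have "\<dots> \<longleftrightarrow> (\<exists>p'\<in>summoves (G, X). \<forall>(a, b)\<in>summoves p'. grundy a \<noteq> grundy b)"
  proof -
    have "(\<forall>(a, b)\<in>summoves p'. Nwin a b) \<longleftrightarrow> (\<forall>(a, b)\<in>summoves p'. grundy a \<noteq> grundy b)"
      if "p' \<in> summoves (G, X)" for p'
      using that IH[of "fst p'" "snd p'"] by fastforce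
    then show ?thesis by blast
  qed
  also have "\<dots> \<longleftrightarrow> (\<exists>(c,d)\<in>summoves (G, X). grundy c = grundy d)"
    using key by (metis (mono_tags, lifting) case_prodE case_prodI2 prod.collapse)
  also have "\<dots> \<longleftrightarrow> grundy G \<noteq> grundy X"
    using key[of G X] by auto
  finally show ?case .
qed

lemma equiv_grundy: "grundy G = grundy H \<Longrightarrow> G \<equiv>\<^sub>g H"
  unfolding game_equiv_def using sg_aux by auto

lemma grundy_nim: "grundy (nim n) = n"
proof (induction n rule: less_induct)
  case (less n)
  have "fset (nims n) = nim ` {..<n}"
    by (induction n) (auto simp: nim_def lessThan_Suc)
  then have "fset (fimage grundy (nims n)) = {..<n}" using less by (force simp: image_image)
  then show ?case unfolding nim_def by (auto intro: mex_eq)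
qed

lemma legal_eq: "finite S \<Longrightarrow> S \<noteq> {} \<Longrightarrow> legal_moves S = {1..Max S}"
proof -
  assume a: "finite S" "S \<noteq> {}"
  have "Max S \<in> S" using a by simp
  moreover have "\<And>i. i \<in> S \<Longrightarrow> i \<le> Max S" using a by simp
  ultimately show ?thesis unfolding legal_moves_def by auto (meson le_trans)
qed

lemma allowed_fin: "finite S \<Longrightarrow> S \<noteq> {} \<Longrightarrow> finite {M. allowedB S M}"
proof -
  assume a: "finite S" "S \<noteq> {}"
  have "{M. allowedB S M} \<subseteq> Pow {1..Max S}" using legal_eq[OF a] unfolding allowedB_def by auto
  then show ?thesis by (rule finite_subset) simp
qed

lemma grundy_qgame: "finite S \<Longrightarrow> S \<noteq> {} \<Longrightarrow>
   grundy (qgame S) = mex ((\<lambda>M. grundy (qgame (qresult S M))) ` {M. allowedB S M})"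
  apply (subst qgame.simps)
  apply (simp add: Abs_fset_inverse allowed_fin image_image del: qgame.simps)
  done

lemma Max_qresult:
  assumes S: "finite S" "S \<noteq> {}" and M: "allowedB S M"
  shows "Max (qresult S M) = Max S - Min M"
proof -
  have fM: "finite M" "M \<noteq> {}" and sub: "M \<subseteq> {1..Max S}"
    using M legal_eq[OF S] unfolding allowedB_def by (auto intro: finite_subset)
  have mM: "Min M \<in> M" using fM by simp
  have fin: "finite (qresult S M)" "qresult S M \<noteq> {}" using qresult_fin_ne[OF S(1) M] by auto
  have "Max S \<in> S" "Min M \<le> Max S" using mM sub S by auto
  then have "Max S - Min M \<in> qresult S M" unfolding qresult_def
    using mM by blast
  moreover have "\<forall>x\<in>qresult S M. x \<le> Max S - Min M" unfolding qresult_def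
    using S fM by auto (meson Max_ge Min_le diff_le_mono diff_le_mono2 le_trans)
  ultimately show ?thesis using fin by (intro Max_eqI) auto
qed

definition F :: "nat \<Rightarrow> nat" where
  "F k = (if k = 2 then 0 else if k = 1 then 1 else k - 1)"

lemma allowed_ge2: "finite S \<Longrightarrow> S \<noteq> {} \<Longrightarrow> Max S \<ge> 2 \<Longrightarrow>
   allowedB S M \<longleftrightarrow> M \<subseteq> {1..Max S} \<and> 2 \<le> card M"
  unfolding allowedB_def using legal_eq[of S] by auto

lemma mins_ge2:
  assumes S: "finite S" "S \<noteq> {}" "Max S \<ge> 2"
  shows "(\<lambda>M. Max S - Min M) ` {M. allowedB S M} = {1..Max S - 1}"
proof (intro equalityI subsetI)
  fix x assume "x \<in> (\<lambda>M. Max S - Min M) ` {M. allowedB S M}"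
  then obtain M where M: "M \<subseteq> {1..Max S}" "2 \<le> card M" "x = Max S - Min M"
    using allowed_ge2[OF S] by auto
  have fM: "finite M" "M \<noteq> {}" using M(1,2) finite_subset by fastforce+
  have "Min M \<ge> 1" using M(1) fM by auto
  moreover have "Min M < Max S"
  proof -
    obtain y where "y \<in> M" "y \<noteq> Min M" using M(2) fM
      by (metis Min_in card_1_singletonE card_le_Suc0_iff_eq le_antisym not_less_eq_eq numeral_2_eq_2)
    then have "Min M < y" using fM Min_le[OF fM(1) \<open>y \<in> M\<close>] by linarith
    moreover have "y \<le> Max S" using M(1) \<open>y \<in> M\<close> by auto
    ultimately show ?thesis by simp
  qed
  ultimately show "x \<in> {1..Max S - 1}" using M(3) by auto
next
  fix x assume x: "x \<in> {1..Max S - 1}"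
  let ?M = "{Max S - x, Max S}"
  have "allowedB S ?M" using allowed_ge2[OF S] x by auto
  moreover have "Min ?M = Max S - x" using x by auto
  ultimately show "x \<in> (\<lambda>M. Max S - Min M) ` {M. allowedB S M}" using x
    by (intro image_eqI[of _ _ ?M]) auto
qed

lemma allowed_1: "finite S \<Longrightarrow> S \<noteq> {} \<Longrightarrow> Max S = 1 \<Longrightarrow> allowedB S M \<longleftrightarrow> M = {1}"
proof -
  assume a: "finite S" "S \<noteq> {}" "Max S = 1"
  then have L: "legal_moves S = {1}" using legal_eq by simp
  show ?thesis
  proof
    assume "allowedB S M"
    then have "M \<noteq> {}" "M \<subseteq> {1}" using L unfolding allowedB_def by auto
    then show "M = {1}" by blast
  qed (simp add: allowedB_def L)
qed

lemma allowed_0: "finite S \<Longrightarrow> S \<noteq> {} \<Longrightarrow> Max S = 0 \<Longrightarrow> \<not> allowedB S M"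
  unfolding allowedB_def using legal_eq[of S] by auto

lemma main: "finite S \<Longrightarrow> S \<noteq> {} \<Longrightarrow> grundy (qgame S) = F (Max S)"
proof (induction "Max S" arbitrary: S rule: less_induct)
  case less
  have opt: "grundy (qgame (qresult S M)) = F (Max S - Min M)" if "allowedB S M" for M
  proof -
    have "finite (qresult S M)" "qresult S M \<noteq> {}" using qresult_fin_ne less.prems that by auto
    moreover have "Max (qresult S M) < Max S"
      using qresult_less[OF less.prems(1) that] calculation Max_in by blast
    ultimately show ?thesis using less.hyps Max_qresult[OF less.prems that] by metis
  qed
  have V: "(\<lambda>M. grundy (qgame (qresult S M))) ` {M. allowedB S M} = F ` ((\<lambda>M. Max S - Min M) ` {M. allowedB S M})"
    using opt by (auto simp: image_image)
  have g: "grundy (qgame S) = mex (F ` ((\<lambda>M. Max S - Min M) ` {M. allowedB S M}))"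
    using grundy_qgame[OF less.prems] V by simp
  consider "Max S = 0" | "Max S = 1" | "Max S \<ge> 2" by linarith
  then show ?case
  proof cases
    case 1
    then show ?thesis using g allowed_0[OF less.prems] by (auto simp: F_def intro: mex_eq)
  next
    case 2
    then have "{M. allowedB S M} = {{1}}" using allowed_1[OF less.prems] by auto
    then show ?thesis using g 2 by (auto simp: F_def intro!: mex_eq)
  next
    case 3
    then have g2: "grundy (qgame S) = mex (F ` {1..Max S - 1})" using g mins_ge2[OF less.prems] by simp
    show ?thesis
    proof (cases "Max S = 2")
      case True then show ?thesis using g2 by (auto simp: F_def intro!: mex_eq)
    next
      case False
      then have k3: "Max S \<ge> 3" using 3 by linarith
      have "mex (F ` {1..Max S - 1}) = Max S - 1"
      proof (rule mex_eq)
        show "\<forall>m<Max S - 1. m \<in> F ` {1..Max S - 1}"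
        proof (intro allI impI)
          fix m assume m: "m < Max S - 1"
          consider "m = 0" | "m = 1" | "m \<ge> 2" by linarith
          then show "m \<in> F ` {1..Max S - 1}"
          proof cases
            case 1 then show ?thesis using k3 by (intro image_eqI[of _ _ 2]) (auto simp: F_def)
          next
            case 2 then show ?thesis using k3 by (intro image_eqI[of _ _ 1]) (auto simp: F_def)
          next
            case 3 then show ?thesis using m by (intro image_eqI[of _ _ "m+1"]) (auto simp: F_def)
          qed
        qed
        show "Max S - 1 \<notin> F ` {1..Max S - 1}" using k3 by (auto simp: F_def)
      qed
      then show ?thesis using g2 False 3 by (simp add: F_def)
    qed
  qed
qed

theorem lemma2:
  fixes S :: "nat set" and k :: nat
  assumes "finite S" and "S \<noteq> {}" and "k = Max S" and "k \<ge> 1"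
  shows "qgame S \<equiv>\<^sub>g (if k = 2 then nim 0 else if k = 1 then nim 1 else nim (k - 1))"
  apply (rule equiv_grundy)
  using main[OF assms(1,2)] assms(3) by (simp add: grundy_nim F_def)

end
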